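(* For an integer $k\ge1$, let $T_k$ be a complete ternary tree of height $k-1$ with root $r_k$ (so for $k=1$, $T_k$ is the single vertex $r_k$, which is also its unique leaf), and let $G_k^*$ be the multigraph obtained from $T_k$ by adding a new vertex $a_k$, one edge $a_kr_k$, and three parallel edges between $a_k$ and each leaf of $T_k$. Then $\mathrm{pw}(G_k^* )\ge k$ for every $k\ge 1$.
   Context: The height of a rooted tree is the maximum number of edges on a root-to-leaf path; a complete ternary tree of height $h$ is the rooted tree in which every non-leaf vertex has exactly three children and all leaves are at distance $h$ from the root. A path-decomposition of a multigraph $H$ is a sequence $(X_0,\dots,X_s)$ of subsets of $V(H)$ such that for each vertex $v$ the indices $i$ with $v\in X_i$ form a non-empty interval, and each edge has both ends in some $X_i$; its width is $\max_i|X_i|-1$, and the pathwidth $\mathrm{pw}(H)$ is the minimum width of a path-decomposition. *)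

theory Defs
  imports Main "HOL-Library.Multiset"
begin

text \<open>Multigraphs: a vertex set V and a multiset E of edges, each edge given by its
  (ordered) pair of ends; parallel edges are repeated elements of E.\<close>

definition is_path_decomp :: "'a set \<Rightarrow> ('a \<times> 'a) multiset \<Rightarrow> 'a set list \<Rightarrow> bool" where
  "is_path_decomp V E Xs \<longleftrightarrow>
     Xs \<noteq> [] \<and>
     (\<forall>X\<in>set Xs. X \<subseteq> V) \<and>
     (\<forall>v\<in>V. (\<exists>i<length Xs. v \<in> Xs ! i) \<and>
            (\<forall>i j l. i \<le> l \<and> l \<le> j \<and> j < length Xs \<and> v \<in> Xs ! i \<and> v \<in> Xs ! j
                     \<longrightarrow> v \<in> Xs ! l)) \<and>
     (\<forall>(u, v)\<in>#E. \<exists>i<length Xs. u \<in> Xs ! i \<and> v \<in> Xs ! i)"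

definition pd_width :: "'a set list \<Rightarrow> nat" where
  "pd_width Xs = Max (card ` set Xs) - 1"

definition pathwidth :: "'a set \<Rightarrow> ('a \<times> 'a) multiset \<Rightarrow> nat" where
  "pathwidth V E = (LEAST w. \<exists>Xs. is_path_decomp V E Xs \<and> pd_width Xs = w)"

text \<open>Complete ternary tree of height k-1: vertices are words over {0,1,2} of length < k,
  the root is the empty word, children of xs are xs@[0], xs@[1], xs@[2].\<close>

definition tern_verts :: "nat \<Rightarrow> nat list set" where
  "tern_verts k = {xs. length xs < k \<and> set xs \<subseteq> {0,1,2}}"

definition tern_leaves :: "nat \<Rightarrow> nat list set" where
  "tern_leaves k = {xs. length xs = k - 1 \<and> set xs \<subseteq> {0,1,2}}"

definition tern_edges :: "nat \<Rightarrow> (nat list \<times> nat list) set" where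
  "tern_edges k = {(xs, xs @ [i]) | xs i. i \<in> {0,1,2} \<and> xs @ [i] \<in> tern_verts k}"

text \<open>G_k^*: vertex None is a_k, Some xs are tree vertices; root r_k = Some [].\<close>

definition Gstar_V :: "nat \<Rightarrow> nat list option set" where
  "Gstar_V k = insert None (Some ` tern_verts k)"

definition Gstar_E :: "nat \<Rightarrow> (nat list option \<times> nat list option) multiset" where
  "Gstar_E k =
     mset_set ((\<lambda>(x, y). (Some x, Some y)) ` tern_edges k)
     + {#(None, Some [])#}
     + (\<Sum>l\<in>tern_leaves k. replicate_mset 3 (None, Some l))"

end

theory Submission
  imports Defs
begin

definition conv :: "nat set \<Rightarrow> bool" where
  "conv S \<longleftrightarrow> (\<forall>i j l. i \<le> l \<and> l \<le> j \<and> i \<in> S \<and> j \<in> S \<longrightarrow> l \<in> S)"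

fun vs :: "nat \<Rightarrow> nat list \<Rightarrow> nat list set" where
  "vs 0 w = {}"
| "vs (Suc m) w = insert w (vs m (w@[0]) \<union> vs m (w@[1]) \<union> vs m (w@[2]))"

lemma vs_mem: "v \<in> vs m w \<longleftrightarrow> (\<exists>u. v = w @ u \<and> length u < m \<and> set u \<subseteq> {0,1,2})"
proof (induction m arbitrary: w v)
  case 0
  then show ?case by simp
next
  case (Suc m)
  show ?case
  proof
    assume "v \<in> vs (Suc m) w"
    then consider "v = w" | i where "i \<in> {0,1,2::nat}" "v \<in> vs m (w@[i])" by auto
    then show "\<exists>u. v = w @ u \<and> length u < Suc m \<and> set u \<subseteq> {0,1,2}"
    proof cases
      case 1 then show ?thesis by (intro exI[of _ "[]"]) auto
    next
      case 2
      then obtain u where "v = (w@[i]) @ u" "length u < m" "set u \<subseteq> {0,1,2}" using Suc.IH by blast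
      then show ?thesis using 2 by (intro exI[of _ "i#u"]) auto
    qed
  next
    assume "\<exists>u. v = w @ u \<and> length u < Suc m \<and> set u \<subseteq> {0,1,2}"
    then obtain u where u: "v = w @ u" "length u < Suc m" "set u \<subseteq> {0,1,2}" by blast
    show "v \<in> vs (Suc m) w"
    proof (cases u)
      case Nil then show ?thesis using u by simp
    next
      case (Cons i u')
      have "v = (w@[i]) @ u'" "length u' < m" "set u' \<subseteq> {0,1,2}" using u Cons by auto
      then have "v \<in> vs m (w@[i])" using Suc.IH[where w="w@[i]" and v=v] by blast
      moreover have "i \<in> {0,1,2}" using u Cons by auto
      ultimately show ?thesis by auto
    qed
  qed
qed

lemma finite_vs: "finite (vs m w)"
  by (induction m arbitrary: w) auto

lemma card_vs_Suc:
  "card {v \<in> vs (Suc m) w. P v} = (if P w then 1 else 0) + card {v \<in> vs m (w@[0]). P v}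
     + card {v \<in> vs m (w@[1]). P v} + card {v \<in> vs m (w@[2]). P v}"
proof -
  define A where "A i = {v \<in> vs m (w@[i]). P v}" for i :: nat
  have fA: "finite (A i)" for i unfolding A_def using finite_vs by auto
  have dis: "A i \<inter> A j = {}" if "i \<noteq> j" for i j
    using that unfolding A_def vs_mem by auto
  have nw: "w \<notin> A i" for i unfolding A_def vs_mem by auto
  have eq: "{v \<in> vs (Suc m) w. P v} = ((if P w then {w} else {}) \<union> A 0) \<union> A 1 \<union> A 2"
    unfolding A_def by auto
  have c1: "card ((if P w then {w} else {}) \<union> A 0) = (if P w then 1 else 0) + card (A 0)"
    using nw[of 0] fA[of 0] by auto
  have c2: "card (((if P w then {w} else {}) \<union> A 0) \<union> A 1) = card ((if P w then {w} else {}) \<union> A 0) + card (A 1)"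
    by (rule card_Un_disjoint) (use fA nw dis[of 0 1] in auto)
  have c3: "card (((if P w then {w} else {}) \<union> A 0) \<union> A 1 \<union> A 2) = card (((if P w then {w} else {}) \<union> A 0) \<union> A 1) + card (A 2)"
    by (rule card_Un_disjoint) (use fA nw dis[of 0 2] dis[of 1 2] in auto)
  show ?thesis unfolding eq c3 c2 c1 unfolding A_def by simp
qed

lemma same_side: "conv S \<Longrightarrow> p \<notin> S \<Longrightarrow> y \<in> S \<Longrightarrow> z \<in> S \<Longrightarrow> (y < p \<longleftrightarrow> z < p)"
  unfolding conv_def by (metis less_imp_le_nat linorder_neqE_nat)

lemma conv_Un: assumes "conv A" "conv B" "A \<inter> B \<noteq> {}" shows "conv (A \<union> B)"
proof -
  obtain c where c: "c \<in> A" "c \<in> B" using assms(3) by blast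
  show ?thesis unfolding conv_def
  proof (intro allI impI)
    fix i j l assume h: "i \<le> l \<and> l \<le> j \<and> i \<in> A \<union> B \<and> j \<in> A \<union> B"
    show "l \<in> A \<union> B"
    proof (cases "l \<le> c")
      case True
      then show ?thesis using h c assms(1,2) unfolding conv_def
        by (metis Un_iff nat_le_linear)
    next
      case False
      then show ?thesis using h c assms(1,2) unfolding conv_def
        by (metis Un_iff nat_le_linear)
    qed
  qed
qed

lemma combine:
  fixes Ca Cb Cc m p :: nat
  assumes "conv Iw" "conv J"
    "Ca = 0 \<Longrightarrow> (\<exists>y\<in>Iw. y<p) \<and> (\<exists>y\<in>J. y<p)"
    "Cc = 0 \<Longrightarrow> (\<exists>y\<in>Iw. y>p) \<and> (\<exists>y\<in>J. y>p)"
    "m+1 \<le> Cb + (if p \<in> J \<union> Iw then 1 else 0)"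
  shows "m+2 \<le> (if p\<in>Iw then 1 else 0) + Ca + Cb + Cc + (if p\<in>J then 1 else 0)"
proof (cases "Ca = 0 \<and> Cc = 0")
  case True
  then obtain y1 y2 z1 z2 where "y1 \<in> Iw" "y1 < p" "y2 \<in> Iw" "y2 > p" "z1 \<in> J" "z1 < p" "z2 \<in> J" "z2 > p"
    using assms(3,4) by blast
  then have "p \<in> Iw" "p \<in> J" using assms(1,2) unfolding conv_def
    by (meson less_imp_le_nat)+
  then show ?thesis using assms(5) by simp
next
  case False
  then show ?thesis using assms(5) by (auto split: if_splits)
qed


lemma finite_tern_verts: "finite (tern_verts k)"
proof -
  have "tern_verts k \<subseteq> {xs. set xs \<subseteq> {0,1,2} \<and> length xs \<le> k}"
    unfolding tern_verts_def by auto
  moreover have "finite {xs. set xs \<subseteq> {0::nat,1,2} \<and> length xs \<le> k}"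
    by (rule finite_lists_length_le) simp
  ultimately show ?thesis by (rule finite_subset)
qed

context
  fixes k :: nat and I :: "nat list \<Rightarrow> nat set" and Ja :: "nat set"
  assumes HI: "\<And>v. v \<in> tern_verts k \<Longrightarrow> I v \<noteq> {} \<and> conv (I v)"
    and HE: "\<And>v i. i \<in> {0,1,2} \<Longrightarrow> v@[i] \<in> tern_verts k \<Longrightarrow> I v \<inter> I (v@[i]) \<noteq> {}"
    and HL: "\<And>v. v \<in> tern_leaves k \<Longrightarrow> I v \<inter> Ja \<noteq> {}"
begin

lemma side:
  "length x + m \<le> k \<Longrightarrow> set x \<subseteq> {0,1,2} \<Longrightarrow> (\<forall>v\<in>vs m x. p \<notin> I v) \<Longrightarrow> v \<in> vs m x
   \<Longrightarrow> y \<in> I v \<Longrightarrow> z \<in> I x \<Longrightarrow> (y < p \<longleftrightarrow> z < p)"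
proof (induction m arbitrary: x v y z)
  case 0
  then show ?case by simp
next
  case (Suc m)
  have xt: "x \<in> tern_verts k" using Suc.prems unfolding tern_verts_def by auto
  have px: "p \<notin> I x" using Suc.prems by simp
  show ?case
  proof (cases "v = x")
    case True
    then show ?thesis using same_side[of "I x" p y z] HI[OF xt] px Suc.prems by auto
  next
    case False
    then obtain i where i: "i \<in> {0,1,2}" "v \<in> vs m (x@[i])" using Suc.prems(4) by auto
    then have "m \<noteq> 0" by (cases m) auto
    then have xit: "x@[i] \<in> tern_verts k" using Suc.prems(1,2) i unfolding tern_verts_def by auto
    obtain z' where z': "z' \<in> I x" "z' \<in> I (x@[i])" using HE[OF i(1) xit] by blast
    have "y < p \<longleftrightarrow> z' < p"
      by (rule Suc.IH[where x="x@[i]" and v=v]) (use Suc.prems i z' in auto)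
    moreover have "z' < p \<longleftrightarrow> z < p"
      using same_side[of "I x" p z' z] HI[OF xt] px z' Suc.prems by auto
    ultimately show ?thesis by simp
  qed
qed

lemma child_lo:
  assumes "1 \<le> m" "length x + m = k" "set x \<subseteq> {0,1,2}" "Ja \<subseteq> J" "q \<le> p"
    "1 \<le> card {v\<in>vs m x. q \<in> I v}" "card {v\<in>vs m x. p \<in> I v} = 0" "Iw \<inter> I x \<noteq> {}"
  shows "(\<exists>y\<in>Iw. y<p) \<and> (\<exists>y\<in>J. y<p)"
proof -
  have fin: "finite {v\<in>vs m x. p \<in> I v}" using finite_vs[of m x] by simp
  have np: "\<forall>v\<in>vs m x. p \<notin> I v" using assms(7) fin by (simp add: card_eq_0_iff)
  have "{v\<in>vs m x. q \<in> I v} \<noteq> {}" using assms(6) by (intro notI) simp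
  then obtain va where va: "va \<in> vs m x" "q \<in> I va" by blast
  have "q \<noteq> p" using np va by auto
  then have qp: "q < p" using assms(5) by simp
  obtain z where z: "z \<in> Iw" "z \<in> I x" using assms(8) by blast
  have lenx: "length x + m \<le> k" using assms(2) by simp
  have "z < p" using side[OF lenx assms(3) np va z(2)] qp by simp
  define l where "l = x @ replicate (m-1) 0"
  have lv: "l \<in> vs m x" unfolding l_def vs_mem using assms(1) by (intro exI[of _ "replicate (m-1) 0"]) (auto simp: set_replicate_conv_if)
  have "l \<in> tern_leaves k" unfolding l_def tern_leaves_def using assms(1-3) by (auto simp: set_replicate_conv_if)
  then obtain y where y: "y \<in> I l" "y \<in> Ja" using HL by blast
  have "y < p" using side[OF lenx assms(3) np lv y(1) z(2)] \<open>z < p\<close> by simp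
  then show ?thesis using z y assms(4) \<open>z < p\<close> by blast
qed

lemma child_hi:
  assumes "1 \<le> m" "length x + m = k" "set x \<subseteq> {0,1,2}" "Ja \<subseteq> J" "p \<le> q"
    "1 \<le> card {v\<in>vs m x. q \<in> I v}" "card {v\<in>vs m x. p \<in> I v} = 0" "Iw \<inter> I x \<noteq> {}"
  shows "(\<exists>y\<in>Iw. y>p) \<and> (\<exists>y\<in>J. y>p)"
proof -
  have fin: "finite {v\<in>vs m x. p \<in> I v}" using finite_vs[of m x] by simp
  have np: "\<forall>v\<in>vs m x. p \<notin> I v" using assms(7) fin by (simp add: card_eq_0_iff)
  have "{v\<in>vs m x. q \<in> I v} \<noteq> {}" using assms(6) by (intro notI) simp
  then obtain va where va: "va \<in> vs m x" "q \<in> I va" by blast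
  have "q \<noteq> p" using np va by auto
  then have qp: "q > p" using assms(5) by simp
  obtain z where z: "z \<in> Iw" "z \<in> I x" using assms(8) by blast
  have lenx: "length x + m \<le> k" using assms(2) by simp
  have "\<not> z < p" using side[OF lenx assms(3) np va z(2)] qp by simp
  moreover have "z \<noteq> p" using np z assms(1) by (cases m) auto
  ultimately have zp: "z > p" by simp
  define l where "l = x @ replicate (m-1) 0"
  have lv: "l \<in> vs m x" unfolding l_def vs_mem using assms(1) by (intro exI[of _ "replicate (m-1) 0"]) (auto simp: set_replicate_conv_if)
  have "l \<in> tern_leaves k" unfolding l_def tern_leaves_def using assms(1-3) by (auto simp: set_replicate_conv_if)
  then obtain y where y: "y \<in> I l" "y \<in> Ja" using HL by blast
  have "\<not> y < p" using side[OF lenx assms(3) np lv y(1) z(2)] zp by simp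
  moreover have "y \<noteq> p" using np y lv by auto
  ultimately have "y > p" by simp
  then show ?thesis using z y assms(4) zp by blast
qed

lemma triple:
  assumes m1: "1 \<le> m" and len: "length w + Suc m = k" and sw: "set w \<subseteq> {0,1,2}"
    and cJ: "conv J" and JJ: "Ja \<subseteq> J"
    and abc: "a \<in> {0,1,2}" "b \<in> {0,1,2}" "c \<in> {0,1,2}"
    and ord: "pa \<le> pb" "pb \<le> pc"
    and ha: "1 \<le> card {v\<in>vs m (w@[a]). pa \<in> I v}"
    and hc: "1 \<le> card {v\<in>vs m (w@[c]). pc \<in> I v}"
    and hb: "m+1 \<le> card {v\<in>vs m (w@[b]). pb \<in> I v} + (if pb \<in> J \<union> I w then 1 else 0)"
  shows "m+2 \<le> (if pb \<in> I w then 1 else 0) + card {v\<in>vs m (w@[a]). pb \<in> I v}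
     + card {v\<in>vs m (w@[b]). pb \<in> I v} + card {v\<in>vs m (w@[c]). pb \<in> I v} + (if pb \<in> J then 1 else 0)"
proof -
  have wt: "w \<in> tern_verts k" using len sw unfolding tern_verts_def by auto
  have ct: "w@[i] \<in> tern_verts k" if "i \<in> {0,1,2}" for i
    using len sw m1 that unfolding tern_verts_def by auto
  have lx: "length (w@[i]) + m = k" for i using len by simp
  have sx: "set (w@[i]) \<subseteq> {0,1,2}" if "i \<in> {0,1,2}" for i using sw that by auto
  show ?thesis
  proof (rule combine[OF conjunct2[OF HI[OF wt]] cJ])
    assume "card {v\<in>vs m (w@[a]). pb \<in> I v} = 0"
    then show "(\<exists>y\<in>I w. y<pb) \<and> (\<exists>y\<in>J. y<pb)"
      using child_lo[OF m1 lx sx[OF abc(1)] JJ ord(1) ha _ HE[OF abc(1) ct[OF abc(1)]]] by blast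
  next
    assume "card {v\<in>vs m (w@[c]). pb \<in> I v} = 0"
    then show "(\<exists>y\<in>I w. y>pb) \<and> (\<exists>y\<in>J. y>pb)"
      using child_hi[OF m1 lx sx[OF abc(3)] JJ ord(2) hc _ HE[OF abc(3) ct[OF abc(3)]]] by blast
  next
    show "m+1 \<le> card {v\<in>vs m (w@[b]). pb \<in> I v} + (if pb \<in> J \<union> I w then 1 else 0)" by (rule hb)
  qed
qed

lemma main:
  "1 \<le> m \<Longrightarrow> length w + m = k \<Longrightarrow> set w \<subseteq> {0,1,2} \<Longrightarrow> conv J \<Longrightarrow> Ja \<subseteq> J \<Longrightarrow> I w \<inter> J \<noteq> {}
   \<Longrightarrow> \<exists>p. m + 1 \<le> card {v\<in>vs m w. p \<in> I v} + (if p \<in> J then 1 else 0)"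
proof (induction m arbitrary: w J)
  case 0
  then show ?case by simp
next
  case (Suc m)
  show ?case
  proof (cases "m = 0")
    case True
    obtain p where "p \<in> I w" "p \<in> J" using Suc.prems(6) by blast
    moreover have "{v\<in>vs (Suc m) w. p \<in> I v} = {w}" using True \<open>p \<in> I w\<close> by auto
    ultimately show ?thesis using True by (intro exI[of _ p]) simp
  next
    case False
    then have m1: "1 \<le> m" by simp
    have len: "length w + Suc m = k" using Suc.prems by simp
    have sw: "set w \<subseteq> {0,1,2}" using Suc.prems by simp
    have wt: "w \<in> tern_verts k" using len sw unfolding tern_verts_def by auto
    have ct: "w@[i] \<in> tern_verts k" if "i \<in> {0,1,2}" for i
      using len sw m1 that unfolding tern_verts_def by auto
    define J' where "J' = J \<union> I w"
    have cJ': "conv J'" unfolding J'_def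
      using conv_Un[OF Suc.prems(4) conjunct2[OF HI[OF wt]]] Suc.prems(6) by (simp add: Int_commute)
    have ex: "\<exists>p. m + 1 \<le> card {v\<in>vs m (w@[i]). p \<in> I v} + (if p \<in> J' then 1 else 0)"
      if i: "i \<in> {0,1,2}" for i
    proof (rule Suc.IH[OF m1])
      show "length (w@[i]) + m = k" using len by simp
      show "set (w@[i]) \<subseteq> {0,1,2}" using sw i by auto
      show "conv J'" by (rule cJ')
      show "Ja \<subseteq> J'" using Suc.prems(5) unfolding J'_def by auto
      show "I (w@[i]) \<inter> J' \<noteq> {}" using HE[OF i ct[OF i]] unfolding J'_def by auto
    qed
    obtain p0 where p0: "m + 1 \<le> card {v\<in>vs m (w@[0]). p0 \<in> I v} + (if p0 \<in> J' then 1 else 0)"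
      using ex[of 0] by auto
    obtain p1 where p1: "m + 1 \<le> card {v\<in>vs m (w@[1]). p1 \<in> I v} + (if p1 \<in> J' then 1 else 0)"
      using ex[of 1] by auto
    obtain p2 where p2: "m + 1 \<le> card {v\<in>vs m (w@[2]). p2 \<in> I v} + (if p2 \<in> J' then 1 else 0)"
      using ex[of 2] by auto
    have q0: "1 \<le> card {v\<in>vs m (w@[0]). p0 \<in> I v}" using p0 m1 by (auto split: if_splits)
    have q1: "1 \<le> card {v\<in>vs m (w@[1]). p1 \<in> I v}" using p1 m1 by (auto split: if_splits)
    have q2: "1 \<le> card {v\<in>vs m (w@[2]). p2 \<in> I v}" using p2 m1 by (auto split: if_splits)
    note T = triple[OF m1 len sw Suc.prems(4) Suc.prems(5)]
    define S where "S p = (if p \<in> I w then 1 else 0) + card {v\<in>vs m (w@[0]). p \<in> I v}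
      + card {v\<in>vs m (w@[1]). p \<in> I v} + card {v\<in>vs m (w@[2]). p \<in> I v} + (if p \<in> J then (1::nat) else 0)" for p
    have "\<exists>p. m + 2 \<le> S p"
    proof -
      consider "p0 \<le> p1" "p1 \<le> p2" | "p0 \<le> p2" "p2 \<le> p1" | "p1 \<le> p0" "p0 \<le> p2"
        | "p1 \<le> p2" "p2 \<le> p0" | "p2 \<le> p0" "p0 \<le> p1" | "p2 \<le> p1" "p1 \<le> p0" by linarith
      then show ?thesis
      proof cases
        case 1 show ?thesis using T[of 0 1 2 p0 p1 p2] 1 q0 q2 p1 unfolding J'_def S_def
          by (intro exI[of _ p1]) (simp add: ac_simps)
      next
        case 2 show ?thesis using T[of 0 2 1 p0 p2 p1] 2 q0 q1 p2 unfolding J'_def S_def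
          by (intro exI[of _ p2]) (simp add: ac_simps)
      next
        case 3 show ?thesis using T[of 1 0 2 p1 p0 p2] 3 q1 q2 p0 unfolding J'_def S_def
          by (intro exI[of _ p0]) (simp add: ac_simps)
      next
        case 4 show ?thesis using T[of 1 2 0 p1 p2 p0] 4 q1 q0 p2 unfolding J'_def S_def
          by (intro exI[of _ p2]) (simp add: ac_simps)
      next
        case 5 show ?thesis using T[of 2 0 1 p2 p0 p1] 5 q2 q1 p0 unfolding J'_def S_def
          by (intro exI[of _ p0]) (simp add: ac_simps)
      next
        case 6 show ?thesis using T[of 2 1 0 p2 p1 p0] 6 q2 q0 p1 unfolding J'_def S_def
          by (intro exI[of _ p1]) (simp add: ac_simps)
      qed
    qed
    then obtain p where "m + 2 \<le> S p" by blast
    moreover note card_vs_Suc[of m w "\<lambda>v. p \<in> I v"]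
    ultimately show ?thesis unfolding S_def by (intro exI[of _ p]) linarith
  qed
qed

end

lemma finite_tern_edges: "finite (tern_edges k)"
proof -
  have "tern_edges k \<subseteq> tern_verts k \<times> tern_verts k"
    unfolding tern_edges_def tern_verts_def by auto
  then show ?thesis using finite_tern_verts by (meson finite_SigmaI finite_subset)
qed

lemma finite_tern_leaves: "finite (tern_leaves k)"
proof -
  have "tern_leaves k \<subseteq> {xs. set xs \<subseteq> {0,1,2} \<and> length xs \<le> k}"
    unfolding tern_leaves_def by auto
  moreover have "finite {xs. set xs \<subseteq> {0::nat,1,2} \<and> length xs \<le> k}"
    by (rule finite_lists_length_le) simp
  ultimately show ?thesis by (rule finite_subset)
qed

lemma edge_tree: "i \<in> {0,1,2} \<Longrightarrow> v@[i] \<in> tern_verts k \<Longrightarrow> (Some v, Some (v@[i])) \<in># Gstar_E k"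
proof -
  assume a: "i \<in> {0,1,2}" "v@[i] \<in> tern_verts k"
  have "(v, v@[i]) \<in> tern_edges k" unfolding tern_edges_def using a by blast
  then have "(Some v, Some (v@[i])) \<in> (\<lambda>(x, y). (Some x, Some y)) ` tern_edges k" by force
  moreover have "finite ((\<lambda>(x, y). (Some x, Some y)) ` tern_edges k)"
    using finite_imageI[OF finite_tern_edges] by simp
  ultimately have "(Some v, Some (v@[i])) \<in># mset_set ((\<lambda>(x, y). (Some x, Some y)) ` tern_edges k)"
    by (simp only: elem_mset_set)
  then show ?thesis unfolding Gstar_E_def by (simp only: union_iff simp_thms)
qed

lemma edge_root: "(None, Some []) \<in># Gstar_E k"
  unfolding Gstar_E_def by simp

lemma edge_leaf: "l \<in> tern_leaves k \<Longrightarrow> (None, Some l) \<in># Gstar_E k"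
proof -
  assume l: "l \<in> tern_leaves k"
  have "(None :: nat list option, Some l) \<in># (\<Sum>l\<in>tern_leaves k. replicate_mset 3 (None, Some l))"
    using l finite_tern_leaves by (simp add: set_mset_sum)
  then show ?thesis unfolding Gstar_E_def by (simp only: union_iff simp_thms)
qed

lemma edges_in_V: assumes "k \<ge> 1" "(u, v) \<in># Gstar_E k" shows "u \<in> Gstar_V k \<and> v \<in> Gstar_V k"
proof -
  have fin: "finite ((\<lambda>(x, y). (Some x, Some y)) ` tern_edges k)"
    using finite_imageI[OF finite_tern_edges] by simp
  from assms(2) consider "(u, v) \<in># mset_set ((\<lambda>(x, y). (Some x, Some y)) ` tern_edges k)"
    | "(u, v) = (None, Some [])" | "(u,v) \<in># (\<Sum>l\<in>tern_leaves k. replicate_mset 3 (None, Some l))"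
    unfolding Gstar_E_def union_iff by auto
  then show ?thesis
  proof cases
    case 1 then have "(u, v) \<in> (\<lambda>(x, y). (Some x, Some y)) ` tern_edges k"
      using elem_mset_set[OF fin] by blast
    then show ?thesis unfolding Gstar_V_def tern_edges_def tern_verts_def by auto
  next
    case 2 then show ?thesis using assms(1) unfolding Gstar_V_def tern_verts_def by auto
  next
    case 3
    then obtain l where "l \<in> tern_leaves k" "(u, v) \<in># replicate_mset 3 (None, Some l)"
      using finite_tern_leaves by (auto simp: set_mset_sum)
    then show ?thesis using assms(1) unfolding Gstar_V_def tern_leaves_def tern_verts_def by auto
  qed
qed

lemma finite_Gstar_V: "finite (Gstar_V k)"
  unfolding Gstar_V_def using finite_tern_verts by simp

lemma width_bound:
  assumes k1: "k \<ge> 1" and pd: "is_path_decomp (Gstar_V k) (Gstar_E k) Xs"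
  shows "k \<le> pd_width Xs"
proof -
  define I where "I v = {i. i < length Xs \<and> Some v \<in> Xs ! i}" for v
  define Ja where "Ja = {i. i < length Xs \<and> None \<in> Xs ! i}"
  note pd' = pd[unfolded is_path_decomp_def]
  have pdV: "\<And>v. v \<in> Gstar_V k \<Longrightarrow> (\<exists>i<length Xs. v \<in> Xs ! i) \<and>
            (\<forall>i j l. i \<le> l \<and> l \<le> j \<and> j < length Xs \<and> v \<in> Xs ! i \<and> v \<in> Xs ! j
                     \<longrightarrow> v \<in> Xs ! l)"
    by (rule bspec[OF conjunct1[OF conjunct2[OF conjunct2[OF pd']]]])
  have pdE: "\<And>u v. (u, v) \<in># Gstar_E k \<Longrightarrow> \<exists>i<length Xs. u \<in> Xs ! i \<and> v \<in> Xs ! i"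
  proof -
    fix u v assume "(u, v) \<in># Gstar_E k"
    from bspec[OF conjunct2[OF conjunct2[OF conjunct2[OF pd']]] this]
    show "\<exists>i<length Xs. u \<in> Xs ! i \<and> v \<in> Xs ! i" by simp
  qed
  have convI: "conv {i. i < length Xs \<and> x \<in> Xs ! i}" if x: "x \<in> Gstar_V k" for x
    unfolding conv_def
  proof (intro allI impI)
    fix i j l assume h: "i \<le> l \<and> l \<le> j \<and> i \<in> {i. i < length Xs \<and> x \<in> Xs ! i} \<and> j \<in> {i. i < length Xs \<and> x \<in> Xs ! i}"
    then have "l < length Xs" by auto
    moreover have "x \<in> Xs ! l" using conjunct2[OF pdV[OF x]] h by blast
    ultimately show "l \<in> {i. i < length Xs \<and> x \<in> Xs ! i}" by simp
  qed
  have neI: "{i. i < length Xs \<and> x \<in> Xs ! i} \<noteq> {}" if x: "x \<in> Gstar_V k" for x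
    using conjunct1[OF pdV[OF x]] by blast
  have hI: "\<And>v. v \<in> tern_verts k \<Longrightarrow> I v \<noteq> {} \<and> conv (I v)"
  proof -
    fix v assume "v \<in> tern_verts k"
    then have "Some v \<in> Gstar_V k" unfolding Gstar_V_def by simp
    then show "I v \<noteq> {} \<and> conv (I v)" unfolding I_def using convI neI by blast
  qed
  have hE: "\<And>v i. i \<in> {0,1,2} \<Longrightarrow> v@[i] \<in> tern_verts k \<Longrightarrow> I v \<inter> I (v@[i]) \<noteq> {}"
  proof -
    fix v i assume "i \<in> {0::nat,1,2}" "v@[i] \<in> tern_verts k"
    from pdE[OF edge_tree[OF this]] obtain j where "j < length Xs" "Some v \<in> Xs ! j" "Some (v@[i]) \<in> Xs ! j"
      by blast
    then have "j \<in> I v \<inter> I (v@[i])" unfolding I_def by simp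
    then show "I v \<inter> I (v@[i]) \<noteq> {}" by blast
  qed
  have hL: "\<And>v. v \<in> tern_leaves k \<Longrightarrow> I v \<inter> Ja \<noteq> {}"
  proof -
    fix v assume "v \<in> tern_leaves k"
    from pdE[OF edge_leaf[OF this]] obtain j where "j < length Xs" "None \<in> Xs ! j" "Some v \<in> Xs ! j"
      by blast
    then have "j \<in> I v \<inter> Ja" unfolding I_def Ja_def by simp
    then show "I v \<inter> Ja \<noteq> {}" by blast
  qed
  have hR: "I [] \<inter> Ja \<noteq> {}"
  proof -
    from pdE[OF edge_root] obtain j where "j < length Xs" "None \<in> Xs ! j" "Some [] \<in> Xs ! j"
      by blast
    then have "j \<in> I [] \<inter> Ja" unfolding I_def Ja_def by simp
    then show ?thesis by blast
  qed
  have cJa: "conv Ja"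
  proof -
    have "None \<in> Gstar_V k" unfolding Gstar_V_def by simp
    then show ?thesis unfolding Ja_def using convI by blast
  qed
  obtain p where p: "k + 1 \<le> card {v\<in>vs k []. p \<in> I v} + (if p \<in> Ja then 1 else 0)"
  proof -
    have "\<exists>p. k + 1 \<le> card {v\<in>vs k []. p \<in> I v} + (if p \<in> Ja then 1 else 0)"
      by (rule main[OF hI hE hL, where m=k and w="[]" and J=Ja]) (use k1 cJa hR in auto)
    then show ?thesis using that by blast
  qed
  define A where "A = {v\<in>vs k []. p \<in> I v}"
  have fA: "finite A" unfolding A_def using finite_vs[of k "[]"] by simp
  have "card A \<noteq> 0" using p k1 unfolding A_def by (auto split: if_splits)
  then have "A \<noteq> {}" by (intro notI) simp
  then have pl: "p < length Xs" unfolding A_def I_def by auto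
  define B where "B = (if p \<in> Ja then {None} else {}) \<union> Some ` A"
  have B_sub: "B \<subseteq> Xs ! p" unfolding B_def A_def I_def Ja_def by auto
  have bag: "Xs ! p \<in> set Xs" using pl by simp
  have finX: "finite (Xs ! p)"
    using pd bag finite_Gstar_V unfolding is_path_decomp_def by (meson finite_subset)
  have cB: "card B = (if p \<in> Ja then 1 else 0) + card A"
    unfolding B_def using fA by (auto simp: card_image)
  have "k + 1 \<le> card (Xs ! p)"
    using card_mono[OF finX B_sub] cB p unfolding A_def by linarith
  moreover have "card (Xs ! p) \<le> Max (card ` set Xs)"
    using bag by (intro Max_ge) auto
  ultimately show ?thesis unfolding pd_width_def by linarith
qed

theorem lemma3p5:
  fixes k :: nat
  assumes "k \<ge> 1"
  shows "pathwidth (Gstar_V k) (Gstar_E k) \<ge> k"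
proof -
  have ex: "\<exists>Xs. is_path_decomp (Gstar_V k) (Gstar_E k) Xs \<and> pd_width Xs = pd_width [Gstar_V k]"
  proof (intro exI[of _ "[Gstar_V k]"] conjI)
    show "is_path_decomp (Gstar_V k) (Gstar_E k) [Gstar_V k]"
      unfolding is_path_decomp_def
    proof (intro conjI)
      show "\<forall>(u, v)\<in>#Gstar_E k. \<exists>i<length [Gstar_V k]. u \<in> [Gstar_V k] ! i \<and> v \<in> [Gstar_V k] ! i"
      proof (rule ballI)
        fix e assume "e \<in># Gstar_E k"
        then show "case e of (u, v) \<Rightarrow> \<exists>i<length [Gstar_V k]. u \<in> [Gstar_V k] ! i \<and> v \<in> [Gstar_V k] ! i"
          using edges_in_V[OF assms, of "fst e" "snd e"] by (cases e) simp
      qed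
    qed auto
  qed simp
  show ?thesis unfolding pathwidth_def
    apply (rule LeastI2_ex)
     apply (rule exI, rule ex)
    using width_bound[OF assms] by blast
qed

end
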